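(* Let $A_1,A_2\in\mathbf{C}^{n\times n}$ and define $\Phi_1(t),\Phi_2(t)\in\mathbf{C}^{n\times n}$ by $$\begin{bmatrix}\Phi_1(t)\\ \Phi_2(t)\end{bmatrix}=\mathrm{e}^{t\{A_1,A_2\}_\diamond}\begin{bmatrix}I_n\\ 0_{n\times n}\end{bmatrix}\ (t\in\mathbf{R}),\qquad \begin{bmatrix}\Phi_1(t)\\ \Phi_2(t)\end{bmatrix}=\left(\{A_1,A_2\}_\diamond\right)^t\begin{bmatrix}I_n\\ 0_{n\times n}\end{bmatrix}\ (t\in\mathbf{Z}),$$ where in the case $t\in\mathbf{Z}$, $t<0$, the bimatrix $\{A_1,A_2\}$ is assumed nonsingular. Then $\{\Phi_1(t),\Phi_2(t)\}=\mathrm{e}^{t\{A_1,A_2\}}$ for $t\in\mathbf{R}$, and $\{\Phi_1(t),\Phi_2(t)\}=\{A_1,A_2\}^t$ for $t\in\mathbf{Z}$.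
   Context: $P^{\#}$ denotes entrywise conjugate. For $A_1,A_2\in\mathbf{C}^{n\times n}$ the bimatrix $\{A_1,A_2\}$ is the real-linear map $\mathbf{C}^n\to\mathbf{C}^n$, $x\mapsto A_1x+A_2^{\#}x^{\#}$; sums are pointwise, products are compositions, $\mathcal{I}_n=\{I_n,0\}$ is the identity, and equality means equality as maps. Powers: $\{A_1,A_2\}^0=\mathcal{I}_n$, $\{A_1,A_2\}^i=\{A_1,A_2\}\{A_1,A_2\}^{i-1}$ for $i\geq1$; if $\{A_1,A_2\}$ is nonsingular (has a two-sided inverse bimatrix), $\{A_1,A_2\}^{-i}$ is the $i$-th power of the inverse. Exponent: $\mathrm{e}^{t\{A_1,A_2\}}=\sum_{i=0}^\infty \frac{t^i}{i!}\{A_1,A_2\}^i$ (applied pointwise to $x$, convergent), $t\in\mathbf{R}$. Complex lifting: $\{A_1,A_2\}_\diamond=\begin{bmatrix}A_1 & A_2^{\#}\\ A_2 & A_1^{\#}\end{bmatrix}$. *)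

theory Defs
  imports "HOL-Analysis.Analysis"
begin

definition vconj :: "complex^'n \<Rightarrow> complex^'n" where
  "vconj x = (\<chi> i. cnj (x $ i))"

definition mconj :: "complex^'n^'m \<Rightarrow> complex^'n^'m" where
  "mconj A = (\<chi> i j. cnj (A $ i $ j))"

text \<open>The bimatrix {A1,A2} as a real-linear map x \<mapsto> A1 x + conj(A2) conj(x).\<close>
definition bimat :: "complex^'n^'n \<Rightarrow> complex^'n^'n \<Rightarrow> complex^'n \<Rightarrow> complex^'n" where
  "bimat A1 A2 = (\<lambda>x. A1 *v x + mconj A2 *v vconj x)"

definition bimat_nonsingular :: "complex^'n^'n \<Rightarrow> complex^'n^'n \<Rightarrow> bool" where
  "bimat_nonsingular A1 A2 \<longleftrightarrow>
     (\<exists>B1 B2. bimat A1 A2 \<circ> bimat B1 B2 = id \<and> bimat B1 B2 \<circ> bimat A1 A2 = id)"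

definition bimat_pow_int :: "complex^'n^'n \<Rightarrow> complex^'n^'n \<Rightarrow> int \<Rightarrow> complex^'n \<Rightarrow> complex^'n" where
  "bimat_pow_int A1 A2 t =
     (if t \<ge> 0 then bimat A1 A2 ^^ nat t
      else (let B = (SOME B. bimat A1 A2 \<circ> bimat (fst B) (snd B) = id \<and>
                               bimat (fst B) (snd B) \<circ> bimat A1 A2 = id)
            in bimat (fst B) (snd B) ^^ nat (- t)))"

definition bimat_exp :: "real \<Rightarrow> complex^'n^'n \<Rightarrow> complex^'n^'n \<Rightarrow> complex^'n \<Rightarrow> complex^'n" where
  "bimat_exp t A1 A2 = (\<lambda>x. \<Sum>i. (t ^ i / fact i) *\<^sub>R ((bimat A1 A2 ^^ i) x))"

definition lift :: "complex^'n^'n \<Rightarrow> complex^'n^'n \<Rightarrow> complex^('n+'n)^('n+'n)" where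
  "lift A1 A2 = (\<chi> i j. case (i, j) of
      (Inl a, Inl b) \<Rightarrow> A1 $ a $ b
    | (Inl a, Inr b) \<Rightarrow> cnj (A2 $ a $ b)
    | (Inr a, Inl b) \<Rightarrow> A2 $ a $ b
    | (Inr a, Inr b) \<Rightarrow> cnj (A1 $ a $ b))"

primrec matpow :: "complex^'m^'m \<Rightarrow> nat \<Rightarrow> complex^'m^'m" where
  "matpow M 0 = mat 1"
| "matpow M (Suc k) = M ** matpow M k"

definition matpow_int :: "complex^'m^'m \<Rightarrow> int \<Rightarrow> complex^'m^'m" where
  "matpow_int M t = (if t \<ge> 0 then matpow M (nat t) else matpow (matrix_inv M) (nat (- t)))"

definition mat_exp :: "real \<Rightarrow> complex^'m^'m \<Rightarrow> complex^'m^'m" where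
  "mat_exp t M = (\<Sum>i. (t ^ i / fact i) *\<^sub>R matpow M i)"

definition E0 :: "complex^'n^('n+'n)" where
  "E0 = (\<chi> i j. case i of Inl a \<Rightarrow> (if a = j then 1 else 0) | Inr a \<Rightarrow> 0)"

definition top_block :: "complex^'n^('n+'n) \<Rightarrow> complex^'n^'n" where
  "top_block P = (\<chi> i j. P $ Inl i $ j)"

definition bot_block :: "complex^'n^('n+'n) \<Rightarrow> complex^'n^'n" where
  "bot_block P = (\<chi> i j. P $ Inr i $ j)"

end

theory Submission
  imports Defs
begin

lemma sum_UNIV_Plus: "sum f (UNIV::('a::finite+'b::finite) set) = (\<Sum>a\<in>UNIV. f (Inl a)) + (\<Sum>b\<in>UNIV. f (Inr b))"
proof -
  have "sum f (UNIV::('a+'b) set) = sum f (Inl ` UNIV \<union> Inr ` UNIV)" by (simp only: UNIV_sum[symmetric])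
  also have "\<dots> = sum f (Inl ` UNIV) + sum f (Inr ` UNIV)"
    by (rule sum.union_disjoint) auto
  also have "\<dots> = (\<Sum>a\<in>UNIV. f (Inl a)) + (\<Sum>b\<in>UNIV. f (Inr b))"
    by (simp add: sum.reindex)
  finally show ?thesis .
qed

lemma mconj_mult: "mconj (A ** B) = mconj A ** mconj B"
  by (simp add: mconj_def matrix_matrix_mult_def vec_eq_iff)
lemma mconj_add: "mconj (A + B) = mconj A + mconj B"
  by (simp add: mconj_def vec_eq_iff)
lemma mconj_mconj[simp]: "mconj (mconj A) = A"
  by (simp add: mconj_def vec_eq_iff)
lemma vconj_vconj[simp]: "vconj (vconj x) = x"
  by (simp add: vconj_def vec_eq_iff)
lemma vconj_add: "vconj (x + y) = vconj x + vconj y"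
  by (simp add: vconj_def vec_eq_iff)
lemma vconj_mv: "vconj (A *v x) = mconj A *v vconj x"
  by (simp add: vconj_def mconj_def matrix_vector_mult_def vec_eq_iff)

lemma bimat_comp:
  "bimat (A1 ** P1 + mconj A2 ** P2) (A2 ** P1 + mconj A1 ** P2) = bimat A1 A2 \<circ> bimat P1 P2"
  by (rule ext) (simp add: bimat_def mconj_add mconj_mult vconj_add vconj_mv
        algebra_simps matrix_vector_mul_assoc)

lemma lift_mult:
  "lift A1 A2 ** lift B1 B2 = lift (A1 ** B1 + mconj A2 ** B2) (A2 ** B1 + mconj A1 ** B2)"
  unfolding vec_eq_iff
proof (intro allI)
  fix i j :: "'a + 'a"
  show "(lift A1 A2 ** lift B1 B2) $ i $ j = lift (A1 ** B1 + mconj A2 ** B2) (A2 ** B1 + mconj A1 ** B2) $ i $ j"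
    by (cases i; cases j) (simp_all add: lift_def matrix_matrix_mult_def sum_UNIV_Plus mconj_def
          cnj_sum add.commute)
qed

lemma top_lift: "top_block (lift A1 A2 ** P) = A1 ** top_block P + mconj A2 ** bot_block P"
  by (simp add: vec_eq_iff top_block_def bot_block_def lift_def matrix_matrix_mult_def sum_UNIV_Plus mconj_def)
lemma bot_lift: "bot_block (lift A1 A2 ** P) = A2 ** top_block P + mconj A1 ** bot_block P"
  by (simp add: vec_eq_iff top_block_def bot_block_def lift_def matrix_matrix_mult_def sum_UNIV_Plus mconj_def)

lemma E0_blocks: "top_block E0 = mat 1" "bot_block E0 = 0"
  by (simp_all add: vec_eq_iff top_block_def bot_block_def E0_def mat_def)

lemma bimat_id: "bimat (mat 1) 0 = id"
  by (rule ext) (simp add: bimat_def mconj_def zero_vec_def[symmetric])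

lemma matpow_blocks:
  "bimat (top_block (matpow (lift A1 A2) k ** E0)) (bot_block (matpow (lift A1 A2) k ** E0)) = bimat A1 A2 ^^ k"
proof (induction k)
  case 0 then show ?case by (simp add: E0_blocks bimat_id)
next
  case (Suc k)
  have "matpow (lift A1 A2) (Suc k) ** E0 = lift A1 A2 ** (matpow (lift A1 A2) k ** E0)"
    by (simp add: matrix_mul_assoc)
  then show ?case using Suc by (simp add: top_lift bot_lift bimat_comp)
qed


lemma mv_axis: "(M *v axis j c) $ i = M $ i $ j * c"
  by (simp add: matrix_vector_mult_def axis_def if_distrib if_distribR cong: if_cong)

lemma vconj_axis: "vconj (axis j c) = axis j (cnj c)"
  by (simp add: vconj_def axis_def vec_eq_iff)

lemma bimat_eq_id:
  assumes "bimat C1 C2 = id"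
  shows "C1 = mat 1 \<and> C2 = 0"
proof -
  have e: "C1 $ i $ j * c + cnj (C2 $ i $ j) * cnj c = (if i = j then c else 0)" for i j c
  proof -
    have "bimat C1 C2 (axis j c) $ i = axis j c $ i" using assms by simp
    then show ?thesis by (simp only: bimat_def vector_add_component vconj_axis mv_axis) (simp add: mconj_def axis_def)
  qed
  have a: "C1 $ i $ j = (if i = j then 1 else 0) \<and> C2 $ i $ j = 0" for i j
  proof -
    have h1: "C1 $ i $ j + cnj (C2 $ i $ j) = (if i = j then 1 else 0)"
      using e[of i j 1] by simp
    have "\<i> * (C1 $ i $ j - cnj (C2 $ i $ j)) = \<i> * (if i = j then 1 else 0)"
      using e[of i j \<i>] by (simp add: algebra_simps)
    then have h2: "C1 $ i $ j - cnj (C2 $ i $ j) = (if i = j then 1 else 0)"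
      by (subst (asm) mult_cancel_left) simp
    define d :: complex where "d = (if i = j then 1 else 0)"
    have h1': "C1 $ i $ j + cnj (C2 $ i $ j) = d" using h1 d_def by simp
    have h2': "C1 $ i $ j - cnj (C2 $ i $ j) = d" using h2 d_def by simp
    have c1: "C1 $ i $ j = d" using h1' h2' by (simp add: algebra_simps)
    have "cnj (C2 $ i $ j) = 0" using h1' c1 by simp
    then have "C1 $ i $ j = (if i = j then 1 else 0)" "C2 $ i $ j = 0" using c1 d_def by auto
    then show ?thesis by simp
  qed
  then show ?thesis by (simp add: vec_eq_iff mat_def)
qed

lemma lift_id: "lift (mat 1) 0 = mat 1"
  unfolding vec_eq_iff
proof (intro allI)
  fix i j :: "'a + 'a"
  show "lift (mat 1) 0 $ i $ j = mat 1 $ i $ j"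
    by (cases i; cases j) (simp_all add: lift_def mat_def)
qed

lemma lift_inv:
  assumes "bimat A1 A2 \<circ> bimat B1 B2 = id" "bimat B1 B2 \<circ> bimat A1 A2 = id"
  shows "matrix_inv (lift A1 A2) = lift B1 B2"
proof -
  have l: "lift A1 A2 ** lift B1 B2 = mat 1"
    using bimat_eq_id[of "A1 ** B1 + mconj A2 ** B2" "A2 ** B1 + mconj A1 ** B2"] assms(1)
    by (simp add: lift_mult bimat_comp lift_id)
  have r: "lift B1 B2 ** lift A1 A2 = mat 1"
    using bimat_eq_id[of "B1 ** A1 + mconj B2 ** A2" "B2 ** A1 + mconj B1 ** A2"] assms(2)
    by (simp add: lift_mult bimat_comp lift_id)
  let ?X = "matrix_inv (lift A1 A2)"
  have "lift A1 A2 ** ?X = mat 1 \<and> ?X ** lift A1 A2 = mat 1"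
    unfolding matrix_inv_def by (rule someI[where x="lift B1 B2"]) (use l r in simp)
  then have "?X = ?X ** (lift A1 A2 ** lift B1 B2)" "?X ** lift A1 A2 = mat 1" using l by auto
  then show ?thesis by (simp add: matrix_mul_assoc)
qed

lemma int_part:
  fixes A1 A2 :: "complex^'n^'n"
  assumes "t \<ge> 0 \<or> bimat_nonsingular A1 A2"
  shows "(let P = matpow_int (lift A1 A2) t ** E0
             in bimat (top_block P) (bot_block P) = bimat_pow_int A1 A2 t)"
proof (cases "t \<ge> 0")
  case True then show ?thesis unfolding matpow_int_def bimat_pow_int_def Let_def using matpow_blocks by simp
next
  case False
  then have ns: "bimat_nonsingular A1 A2" using assms by simp
  define B where "B = (SOME B. bimat A1 A2 \<circ> bimat (fst B) (snd B) = id \<and>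
                               bimat (fst B) (snd B) \<circ> bimat A1 A2 = id)"
  have "bimat A1 A2 \<circ> bimat (fst B) (snd B) = id \<and> bimat (fst B) (snd B) \<circ> bimat A1 A2 = id"
  proof -
    obtain B1 B2 where bb: "bimat A1 A2 \<circ> bimat B1 B2 = id" "bimat B1 B2 \<circ> bimat A1 A2 = id"
      using ns unfolding bimat_nonsingular_def by blast
    show ?thesis unfolding B_def
      by (rule someI[where x="(B1, B2)"]) (simp add: bb)
  qed
  then have "matrix_inv (lift A1 A2) = lift (fst B) (snd B)" by (intro lift_inv) (erule conjunct1, erule conjunct2)
  moreover have "bimat_pow_int A1 A2 t = bimat (fst B) (snd B) ^^ nat (- t)"
    using False unfolding bimat_pow_int_def B_def Let_def by simp
  moreover have "matpow_int (lift A1 A2) t = matpow (matrix_inv (lift A1 A2)) (nat (- t))"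
    using False unfolding matpow_int_def by simp
  ultimately show ?thesis by (simp only: Let_def matpow_blocks)
qed


definition msum :: "complex^'b^'a \<Rightarrow> real" where
  "msum A = (\<Sum>i\<in>UNIV. \<Sum>j\<in>UNIV. norm (A$i$j))"

lemma msum_nonneg: "0 \<le> msum A"
  unfolding msum_def by (intro sum_nonneg) auto

lemma norm_le_msum: "norm A \<le> msum A"
proof -
  have "norm A \<le> (\<Sum>i\<in>UNIV. norm (A$i))" by (simp add: norm_vec_def L2_set_le_sum)
  also have "\<dots> \<le> (\<Sum>i\<in>UNIV. \<Sum>j\<in>UNIV. norm (A$i$j))"
    by (intro sum_mono) (simp add: norm_vec_def L2_set_le_sum)
  finally show ?thesis by (simp add: msum_def)
qed

lemma msum_mult: "msum ((A::complex^'k^'i) ** (B::complex^'j^'k)) \<le> msum A * msum B"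
proof -
  have "msum (A ** B) \<le> (\<Sum>i\<in>UNIV. \<Sum>j\<in>UNIV. \<Sum>k\<in>UNIV. norm (A$i$k) * norm (B$k$j))"
  proof -
    have "norm ((A ** B)$i$j) \<le> (\<Sum>k\<in>UNIV. norm (A$i$k) * norm (B$k$j))" for i j
    proof -
      have "(A ** B)$i$j = (\<Sum>k\<in>UNIV. A$i$k * B$k$j)" by (simp add: matrix_matrix_mult_def)
      then have "norm ((A ** B)$i$j) \<le> (\<Sum>k\<in>UNIV. norm (A$i$k * B$k$j))" by (simp only: norm_sum)
      then show ?thesis by (simp only: norm_mult)
    qed
    then show ?thesis unfolding msum_def by (intro sum_mono) blast
  qed
  also have "\<dots> = (\<Sum>i\<in>UNIV. \<Sum>k\<in>UNIV. norm (A$i$k) * (\<Sum>j\<in>UNIV. norm (B$k$j)))"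
  proof (intro sum.cong refl)
    fix i
    have "(\<Sum>j\<in>UNIV. \<Sum>k\<in>UNIV. norm (A$i$k) * norm (B$k$j)) = (\<Sum>k\<in>UNIV. \<Sum>j\<in>UNIV. norm (A$i$k) * norm (B$k$j))"
      by (rule sum.swap)
    then show "(\<Sum>j\<in>UNIV. \<Sum>k\<in>UNIV. norm (A$i$k) * norm (B$k$j)) = (\<Sum>k\<in>UNIV. norm (A$i$k) * (\<Sum>j\<in>UNIV. norm (B$k$j)))"
      by (simp only: sum_distrib_left)
  qed
  also have "\<dots> \<le> (\<Sum>i\<in>UNIV. \<Sum>k\<in>UNIV. norm (A$i$k) * msum B)"
    unfolding msum_def
  proof (intro sum_mono mult_left_mono)
    fix k
    show "(\<Sum>j\<in>UNIV. norm (B$k$j)) \<le> (\<Sum>i\<in>UNIV. \<Sum>j\<in>UNIV. norm (B$i$j))"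
      by (rule member_le_sum[where f="\<lambda>k. \<Sum>j\<in>UNIV. norm (B$k$j)"]) (auto intro: sum_nonneg)
  qed simp
  also have "\<dots> = msum A * msum B" by (simp add: msum_def sum_distrib_right)
  finally show ?thesis .
qed

lemma msum_matpow: "msum (matpow M k) \<le> msum M ^ k * msum (mat 1 :: complex^'m^'m)"
  for M :: "complex^'m^'m"
proof (induction k)
  case 0 then show ?case by simp
next
  case (Suc k)
  have "msum (matpow M (Suc k)) \<le> msum M * msum (matpow M k)" by (simp add: msum_mult)
  also have "\<dots> \<le> msum M * (msum M ^ k * msum (mat 1 :: complex^'m^'m))"
    by (intro mult_left_mono Suc msum_nonneg)
  finally show ?case by (simp add: mult.assoc)
qed

lemma summable_matexp: "summable (\<lambda>i. (t^i / fact i) *\<^sub>R matpow (M::complex^'m^'m) i)"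
proof (rule summable_comparison_test)
  let ?C = "msum (mat 1 :: complex^'m^'m)"
  show "summable (\<lambda>i. (inverse (fact i) * (\<bar>t\<bar> * msum M)^i) * ?C)"
    by (intro summable_mult2 summable_exp)
  show "\<exists>N. \<forall>n\<ge>N. norm ((t^n / fact n) *\<^sub>R matpow M n) \<le> (inverse (fact n) * (\<bar>t\<bar> * msum M)^n) * ?C"
  proof (intro exI allI impI)
    fix n :: nat
    have "norm ((t^n / fact n) *\<^sub>R matpow M n) = (\<bar>t\<bar>^n / fact n) * norm (matpow M n)"
      by (simp add: power_abs)
    also have "\<dots> \<le> (\<bar>t\<bar>^n / fact n) * (msum M ^ n * ?C)"
      by (intro mult_left_mono order_trans[OF norm_le_msum msum_matpow]) auto
    also have "\<dots> = (inverse (fact n) * (\<bar>t\<bar> * msum M)^n) * ?C"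
      by (simp add: power_mult_distrib field_simps)
    finally show "norm ((t^n / fact n) *\<^sub>R matpow M n) \<le> (inverse (fact n) * (\<bar>t\<bar> * msum M)^n) * ?C" .
  qed
qed

lemma scR: "r *\<^sub>R (c::complex) = of_real r * c"
  by (simp add: scaleR_conv_of_real)

lemma blk_add: "top_block (P + Q) = top_block P + top_block Q" "bot_block (P + Q) = bot_block P + bot_block Q"
  by (simp_all add: top_block_def bot_block_def vec_eq_iff)
lemma blk_scale: "top_block (r *\<^sub>R P) = r *\<^sub>R top_block P" "bot_block (r *\<^sub>R P) = r *\<^sub>R bot_block P"
  by (simp_all add: top_block_def bot_block_def vec_eq_iff)
lemma matrix_add_rdistrib2: "(A + B) ** C = A ** C + B ** (C::'a::semiring_1^_^_)"
  by (simp add: matrix_matrix_mult_def vec_eq_iff sum.distrib distrib_right)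
lemma mconj_scale: "mconj (r *\<^sub>R A) = r *\<^sub>R mconj A"
  by (simp add: mconj_def vec_eq_iff)
lemma mv_scale: "(r *\<^sub>R (A::complex^'b^'a)) *v x = r *\<^sub>R (A *v x)"
  by (simp add: matrix_vector_mult_def vec_eq_iff scaleR_sum_right)
lemma bimat_add: "bimat (X + X') (Y + Y') x = bimat X Y x + bimat X' Y' x"
  by (simp add: bimat_def mconj_add matrix_vector_mult_add_rdistrib)
lemma bimat_scale: "bimat (r *\<^sub>R X) (r *\<^sub>R Y) x = r *\<^sub>R bimat X Y x"
  by (simp add: bimat_def mconj_scale mv_scale scaleR_add_right)

lemma lin_G: "bounded_linear (\<lambda>Q::complex^('n::finite+'n)^('n+'n). bimat (top_block (Q ** E0)) (bot_block (Q ** E0)) x)"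
proof -
  have "linear (\<lambda>Q::complex^('n::finite+'n)^('n+'n). bimat (top_block (Q ** E0)) (bot_block (Q ** E0)) x)"
    by (rule linearI) (simp_all add: blk_add blk_scale matrix_add_rdistrib2 scalar_matrix_assoc[symmetric]
        bimat_add bimat_scale)
  then show ?thesis by (simp add: linear_conv_bounded_linear)
qed

lemma exp_part:
  fixes A1 A2 :: "complex^'n^'n"
  shows "let P = mat_exp t (lift A1 A2) ** E0
            in bimat (top_block P) (bot_block P) = bimat_exp t A1 A2"
proof -
  { fix x
    let ?G = "\<lambda>Q::complex^('n::finite+'n)^('n+'n). bimat (top_block (Q ** E0)) (bot_block (Q ** E0)) x"
    interpret G: bounded_linear ?G by (rule lin_G)
    have "?G (mat_exp t (lift A1 A2)) = (\<Sum>i. ?G ((t ^ i / fact i) *\<^sub>R matpow (lift A1 A2) i))"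
      unfolding mat_exp_def by (rule G.suminf) (rule summable_matexp)
    also have "\<dots> = (\<Sum>i. (t ^ i / fact i) *\<^sub>R ((bimat A1 A2 ^^ i) x))"
      by (simp only: G.scaleR matpow_blocks)
    finally have "?G (mat_exp t (lift A1 A2)) = bimat_exp t A1 A2 x"
      by (simp add: bimat_exp_def) }
  then show ?thesis by (auto simp: Let_def)
qed

theorem lemma8:
  fixes A1 A2 :: "complex^'n^'n"
  shows "(\<forall>t::real.
            let P = mat_exp t (lift A1 A2) ** E0
            in bimat (top_block P) (bot_block P) = bimat_exp t A1 A2)
       \<and> (\<forall>t::int. (t \<ge> 0 \<or> bimat_nonsingular A1 A2) \<longrightarrow>
            (let P = matpow_int (lift A1 A2) t ** E0
             in bimat (top_block P) (bot_block P) = bimat_pow_int A1 A2 t))"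
  using exp_part int_part by blast

end
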